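(* Let $P:\mathbb{Z}\times[2]\to\mathbb{R}^2$ be a circular net such that for each $j\in[2]$ the points $\{P_{i,j}\}_{i\in\mathbb{Z}}$ lie on a line $\mathcal{H}_j$. For $i\in\mathbb{Z}$ let $\mathcal{V}_i$ be the line $P_{i,1}\vee P_{i,2}$. Then the lines $\{\mathcal{V}_{2i}\}_{i\in\mathbb{Z}}$ are parallel, and the lines $\{\mathcal{V}_{2i+1}\}_{i\in\mathbb{Z}}$ are parallel.
   Context: $[2]=\{1,2\}$. A circular net $P:\mathbb{Z}\times[2]\to\mathbb{R}^2$ is a map such that for all $i$ the four points $P_{i,1},P_{i+1,1},P_{i+1,2},P_{i,2}$ lie on a circle. $X\vee Y$ denotes the line through $X$ and $Y$. Standing assumption: all data are generic (in general position subject to the stated constraints). *)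

theory Defs
  imports "HOL-Analysis.Analysis"
begin

type_synonym point = "real ^ 2"

definition join :: "point \<Rightarrow> point \<Rightarrow> point set" where
  "join X Y = affine hull {X, Y}"

definition is_line :: "point set \<Rightarrow> bool" where
  "is_line L \<longleftrightarrow> (\<exists>X Y. X \<noteq> Y \<and> L = join X Y)"

text \<open>Parallel lines: one is a translate of the other (equal lines count as parallel).\<close>
definition parallel :: "point set \<Rightarrow> point set \<Rightarrow> bool" where
  "parallel L M \<longleftrightarrow> is_line L \<and> is_line M \<and> (\<exists>v. L = (\<lambda>x. v + x) ` M)"

definition concyclic :: "point \<Rightarrow> point \<Rightarrow> point \<Rightarrow> point \<Rightarrow> bool" where
  "concyclic A B C D \<longleftrightarrow> (\<exists>c r. r > 0 \<and> {A, B, C, D} \<subseteq> sphere c r)"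

text \<open>Circular net P : Z x [2] -> R^2, written curried; only j \<in> {1,2} is used.\<close>
definition circular_net :: "(int \<Rightarrow> nat \<Rightarrow> point) \<Rightarrow> bool" where
  "circular_net P \<longleftrightarrow> (\<forall>i. concyclic (P i 1) (P (i+1) 1) (P (i+1) 2) (P i 2))"

end

theory Submission
  imports Defs
begin

lemma join_char: "join X Y = {X + t  *\<^sub>R (Y - X) | t. True}"
proof -
  have "\<And>u v. u + v = 1 \<Longrightarrow> u  *\<^sub>R X + v  *\<^sub>R Y = X + v  *\<^sub>R (Y - X)"
    by (simp add: algebra_simps) (metis add_diff_cancel_right' scaleR_left_diff_distrib scaleR_one add.commute diff_add_cancel)
  moreover have "\<And>t. X + t  *\<^sub>R (Y - X) = (1 - t)  *\<^sub>R X + t  *\<^sub>R Y"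
    by (simp add: algebra_simps)
  ultimately show ?thesis unfolding join_def affine_hull_2 by fastforce
qed

lemma pow_expand:
  fixes p u c :: "'a::real_inner"
  shows "norm (p + s  *\<^sub>R u - c)^2 = (inner (p-c) (p-c)) + 2 * s * (inner (p-c) u) + s^2 * (inner u u)"
proof -
  have "p + s  *\<^sub>R u - c = (p - c) + s  *\<^sub>R u" by (simp add: algebra_simps)
  then show ?thesis unfolding power2_norm_eq_inner
    by (simp add: inner_add_left inner_add_right inner_commute power2_eq_square algebra_simps)
qed

lemma pow_line:
  fixes p u c :: "'a::real_inner"
  assumes "norm (p + s1  *\<^sub>R u - c) = r" "norm (p + s2  *\<^sub>R u - c) = r" "s1 \<noteq> s2"
  shows "norm (p + s  *\<^sub>R u - c)^2 - r^2 = (inner u u)  *  (s - s1)  *  (s - s2)"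
    and "2 * (inner (p-c) u) = -(s1+s2) * (inner u u)"
proof -
  define x where "x = (p-c)\<bullet>(p-c)"
  define y where "y = (p-c)\<bullet>u"
  define U where "U = u\<bullet>u"
  have e1: "x + 2 * s1 * y + s1^2 * U = r^2" using pow_expand[of p s1 u c] assms(1) unfolding x_def y_def U_def by simp
  have e2: "x + 2 * s2 * y + s2^2 * U = r^2" using pow_expand[of p s2 u c] assms(2) unfolding x_def y_def U_def by simp
  have "(s1 - s2)  *  (2 * y + (s1+s2) * U) = 0" using e1 e2 by (simp add: algebra_simps power2_eq_square)
  hence "2 * y + (s1+s2) * U = 0" using assms(3) by simp
  hence ey: "2 * y = -(s1+s2) * U" by (simp add: algebra_simps)
  then show "2 * (inner (p-c) u) = -(s1+s2) * (inner u u)" unfolding y_def U_def .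
  have ex: "x - r^2 = s1 * s2 * U" using e1 ey by algebra
  show "norm (p + s  *\<^sub>R u - c)^2 - r^2 = (inner u u)  *  (s - s1)  *  (s - s2)"
    unfolding pow_expand U_def[symmetric] x_def[symmetric] y_def[symmetric]
    using ex ey by algebra
qed

lemma F_par:
  fixes p q u c :: "'a::real_inner"
  assumes "norm (p + a0 *\<^sub>R u - c) = r" "norm (p + a1 *\<^sub>R u - c) = r" "a0 \<noteq> a1"
    "norm (q + b0 *\<^sub>R u - c) = r" "norm (q + b1 *\<^sub>R u - c) = r" "b0 \<noteq> b1"
  shows "2 * inner (p - q) u = (b0 + b1 - a0 - a1) * inner u u"
proof -
  have "2 * (inner (p-c) u) = -(a0+a1) * (inner u u)" by (rule pow_line(2)[OF assms(1-3)])
  moreover have "2 * (inner (q-c) u) = -(b0+b1) * (inner u u)" by (rule pow_line(2)[OF assms(4-6)])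
  moreover have "inner (p - q) u = inner (p-c) u - inner (q-c) u" by (simp add: inner_diff_left)
  ultimately show ?thesis by algebra
qed

lemma G_int:
  fixes Oo u w c :: "'a::real_inner"
  assumes "norm (Oo + a0 *\<^sub>R u - c) = r" "norm (Oo + a1 *\<^sub>R u - c) = r" "a0 \<noteq> a1"
    "norm (Oo + b0 *\<^sub>R w - c) = r" "norm (Oo + b1 *\<^sub>R w - c) = r" "b0 \<noteq> b1"
  shows "inner u u * a0 * a1 = inner w w * b0 * b1"
proof -
  have "norm (Oo + 0 *\<^sub>R u - c)^2 - r^2 = (inner u u) * (0 - a0) * (0 - a1)" by (rule pow_line(1)[OF assms(1-3)])
  moreover have "norm (Oo + 0 *\<^sub>R w - c)^2 - r^2 = (inner w w) * (0 - b0) * (0 - b1)" by (rule pow_line(1)[OF assms(4-6)])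
  ultimately show ?thesis by simp
qed

lemma step_par:
  fixes A B :: "int \<Rightarrow> 'a::real_inner"
  assumes circ: "\<And>i. \<exists>c r. norm (A i - c) = r \<and> norm (A (i+1) - c) = r \<and> norm (B i - c) = r \<and> norm (B (i+1) - c) = r"
    and pa: "\<And>j. A j = p + a j *\<^sub>R u" and pb: "\<And>j. B j = q + b j *\<^sub>R u"
    and u: "u \<noteq> 0" and na: "\<And>i. a i \<noteq> a (i+1)" and nb: "\<And>i. b i \<noteq> b (i+1)"
  shows "B (i+2) - A (i+2) = B i - A i"
proof -
  have F: "2 * inner (p - q) u = (b k + b (k+1) - a k - a (k+1)) * inner u u" for k
  proof -
    obtain c r where "norm (A k - c) = r" "norm (A (k+1) - c) = r" "norm (B k - c) = r" "norm (B (k+1) - c) = r"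
      using circ by blast
    then show ?thesis using F_par[of p "a k" u c r "a (k+1)" q "b k" "b (k+1)"] na nb pa pb by metis
  qed
  have "(b (i+2) - a (i+2) - (b i - a i)) * inner u u = 0"
    using F[of i] F[of "i+1"] by (simp add: algebra_simps)
  hence "b (i+2) - a (i+2) = b i - a i" using u by simp
  moreover have "B k - A k = (q - p) + (b k - a k) *\<^sub>R u" for k
    by (simp add: pa pb algebra_simps)
  ultimately show ?thesis by metis
qed

lemma step_int:
  fixes A B :: "int \<Rightarrow> 'a::real_inner"
  assumes circ: "\<And>i. \<exists>c r. norm (A i - c) = r \<and> norm (A (i+1) - c) = r \<and> norm (B i - c) = r \<and> norm (B (i+1) - c) = r"
    and pa: "\<And>j. A j = Oo + a j *\<^sub>R u" and pb: "\<And>j. B j = Oo + b j *\<^sub>R w"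
    and u: "u \<noteq> 0" and w: "w \<noteq> 0" and na: "\<And>i. a i \<noteq> a (i+1)" and nb: "\<And>i. b i \<noteq> b (i+1)"
    and nab: "\<And>i. A i \<noteq> B i"
  shows "\<exists>l. l \<noteq> 0 \<and> B (i+2) - A (i+2) = l *\<^sub>R (B i - A i)"
proof -
  have G: "inner u u * a k * a (k+1) = inner w w * b k * b (k+1)" for k
  proof -
    obtain c r where "norm (A k - c) = r" "norm (A (k+1) - c) = r" "norm (B k - c) = r" "norm (B (k+1) - c) = r"
      using circ by blast
    then show ?thesis using G_int[of Oo "a k" u c r "a (k+1)" "b k" w "b (k+1)"] na nb pa pb by metis
  qed
  have z: "a k = 0 \<Longrightarrow> b k \<noteq> 0" for k using nab[of k] pa pb by auto
  have U: "inner u u \<noteq> 0" and W: "inner w w \<noteq> 0" using u w by auto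
  have G1: "inner u u * a i * a (i+1) = inner w w * b i * b (i+1)" by (rule G)
  have G2: "inner u u * a (i+1) * a (i+2) = inner w w * b (i+1) * b (i+2)" using G[of "i+1"] by (simp add: add.assoc)
  have key: "a (i+2) * b i = a i * b (i+2)"
  proof (cases "a (i+1) = 0")
    case True
    then have "b (i+1) \<noteq> 0" using z by blast
    then have "b i = 0" "b (i+2) = 0" using G1 G2 True W by auto
    then show ?thesis by simp
  next
    case False
    show ?thesis
    proof (cases "b (i+1) = 0")
      case True
      then have "a i = 0" "a (i+2) = 0" using G1 G2 False U by auto
      then show ?thesis by simp
    next
      case F2: False
      have "inner u u * a (i+1) * b (i+1) * (a (i+2) * b i - a i * b (i+2)) = 0"
        using G1 G2 by algebra
      then show ?thesis using U False F2 by simp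
    qed
  qed
  show ?thesis
  proof (cases "b i = 0")
    case True
    then have ai: "a i \<noteq> 0" using z by blast
    then have b2: "b (i+2) = 0" using key True by simp
    then have a2: "a (i+2) \<noteq> 0" using z by blast
    show ?thesis
      by (rule exI[of _ "a (i+2) / a i"]) (use ai a2 b2 True in \<open>simp add: pa pb algebra_simps\<close>)
  next
    case False
    then have "b (i+2) \<noteq> 0" using key z by force
    moreover have "a (i+2) = a i * b (i+2) / b i" using key False by (simp add: field_simps)
    ultimately show ?thesis using False
      by (intro exI[of _ "b (i+2) / b i"]) (simp add: pa pb algebra_simps)
  qed
qed

lemma parallel_of:
  assumes "X \<noteq> Y" "Z \<noteq> W" "l \<noteq> 0" "W - Z = l *\<^sub>R (Y - X)"
  shows "parallel (join X Y) (join Z W)"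
  unfolding parallel_def
proof (intro conjI)
  show "is_line (join X Y)" "is_line (join Z W)" using assms(1,2) unfolding is_line_def by blast+
  have "join X Y = (\<lambda>x. (X - Z) + x) ` join Z W"
  proof
    show "(\<lambda>x. (X - Z) + x) ` join Z W \<subseteq> join X Y"
    proof
      fix y assume "y \<in> (\<lambda>x. (X - Z) + x) ` join Z W"
      then obtain t where "y = X - Z + (Z + t *\<^sub>R (W - Z))" unfolding join_char by blast
      then have "y = X + (t * l) *\<^sub>R (Y - X)" using assms(4) by (simp add: algebra_simps)
      then show "y \<in> join X Y" unfolding join_char by blast
    qed
    show "join X Y \<subseteq> (\<lambda>x. (X - Z) + x) ` join Z W"
    proof
      fix y assume "y \<in> join X Y"
      then obtain t where y: "y = X + t *\<^sub>R (Y - X)" unfolding join_char by blast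
      have "Z + (t / l) *\<^sub>R (W - Z) \<in> join Z W" unfolding join_char by blast
      moreover have "y = (X - Z) + (Z + (t / l) *\<^sub>R (W - Z))" using y assms(3,4) by simp
      ultimately show "y \<in> (\<lambda>x. (X - Z) + x) ` join Z W" by blast
    qed
  qed
  then show "\<exists>v. join X Y = (\<lambda>x. v + x) ` join Z W" by blast
qed

lemma chain:
  fixes D :: "int \<Rightarrow> 'a::real_vector"
  assumes st: "\<And>j. \<exists>l. l \<noteq> 0 \<and> D (j+2) = l *\<^sub>R D j"
  shows "\<exists>l. l \<noteq> 0 \<and> D (m + 2*k) = l *\<^sub>R D m"
proof (induct k rule: int_induct[where k=0])
  case base
  then show ?case by (intro exI[of _ 1]) simp
next
  case (step1 i)
  then obtain l where l: "l \<noteq> 0" "D (m + 2*i) = l *\<^sub>R D m" by blast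
  obtain l' where l': "l' \<noteq> 0" "D ((m + 2*i) + 2) = l' *\<^sub>R D (m + 2*i)" using st by blast
  have e: "m + 2*(i+1) = (m + 2*i) + 2" by simp
  show ?case unfolding e using l l' by (intro exI[of _ "l' * l"]) simp
next
  case (step2 i)
  then obtain l where l: "l \<noteq> 0" "D (m + 2*i) = l *\<^sub>R D m" by blast
  obtain l' where l': "l' \<noteq> 0" "D ((m + 2*(i-1)) + 2) = l' *\<^sub>R D (m + 2*(i-1))" using st by blast
  have e: "(m + 2*(i-1)) + 2 = m + 2*i" by simp
  have "D (m + 2*(i-1)) = (1/l') *\<^sub>R D (m + 2*i)" using l' unfolding e by simp
  then show ?case using l l' by (intro exI[of _ "l / l'"]) simp
qed

lemma line_param:
  assumes "is_line L" "\<forall>i. P i \<in> L"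
  shows "\<exists>X u a. u \<noteq> 0 \<and> (\<forall>i. P i = X + a i *\<^sub>R u)"
proof -
  obtain X Y where XY: "X \<noteq> Y" "L = join X Y" using assms(1) unfolding is_line_def by blast
  have "\<forall>i. \<exists>t. P i = X + t *\<^sub>R (Y - X)" using assms(2) unfolding XY join_char by blast
  then obtain a where "\<forall>i. P i = X + a i *\<^sub>R (Y - X)" by metis
  then show ?thesis using XY(1) by (intro exI[of _ X] exI[of _ "Y - X"] exI[of _ a]) simp
qed

lemma cramer_comp:
  fixes x1 x2 y1 y2 u1 u2 w1 w2 t s :: real
  assumes "t*(u1*w2-u2*w1) = (y1-x1)*w2 - (y2-x2)*w1" "s*(u1*w2-u2*w1) = (y1-x1)*u2-(y2-x2)*u1"
  shows "(x1+t*u1)*(u1*w2-u2*w1) = (y1+s*w1)*(u1*w2-u2*w1)"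
    and "(x2+t*u2)*(u1*w2-u2*w1) = (y2+s*w2)*(u1*w2-u2*w1)"
  using assms by algebra+

lemma two_step:
  fixes P :: "int \<Rightarrow> nat \<Rightarrow> point"
  assumes net: "circular_net P"
    and generic: "\<And>i. distinct [P i 1, P (i+1) 1, P (i+1) 2, P i 2]"
    and H: "\<And>j. j \<in> {1, 2} \<Longrightarrow> \<exists>L. is_line L \<and> (\<forall>i. P i j \<in> L)"
  shows "\<exists>l. l \<noteq> 0 \<and> P (i+2) 2 - P (i+2) 1 = l *\<^sub>R (P i 2 - P i 1)"
proof -
  define A where "A = (\<lambda>i. P i 1)"
  define B where "B = (\<lambda>i. P i 2)"
  obtain L1 where L1: "is_line L1" "\<forall>i. A i \<in> L1" using H[of 1] unfolding A_def by auto
  obtain L2 where L2: "is_line L2" "\<forall>i. B i \<in> L2" using H[of 2] unfolding B_def by auto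
  obtain X1 u a where u: "u \<noteq> 0" and pa0': "\<forall>i. A i = X1 + a i *\<^sub>R u"
    using line_param[OF L1] by blast
  obtain X2 w b where w: "w \<noteq> 0" and pb0': "\<forall>i. B i = X2 + b i *\<^sub>R w"
    using line_param[OF L2] by blast
  have pa0: "\<And>i. A i = X1 + a i *\<^sub>R u" using pa0' by blast
  have pb0: "\<And>i. B i = X2 + b i *\<^sub>R w" using pb0' by blast
  have circ: "\<exists>c r. norm (A i - c) = r \<and> norm (A (i+1) - c) = r \<and> norm (B i - c) = r \<and> norm (B (i+1) - c) = r" for i
  proof -
    obtain c r where "{P i 1, P (i+1) 1, P (i+1) 2, P i 2} \<subseteq> sphere c r"
      using net unfolding circular_net_def concyclic_def by blast
    then show ?thesis unfolding A_def B_def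
      by (intro exI[of _ c] exI[of _ r]) (simp add: dist_norm norm_minus_commute)
  qed
  have dA: "A i \<noteq> A (i+1)" and dB: "B i \<noteq> B (i+1)" and dAB: "A i \<noteq> B i" for i
    using generic[of i] unfolding A_def B_def by auto
  show ?thesis
  proof (cases "u$1 * w$2 = u$2 * w$1")
    case True
    obtain m where wm: "w = m *\<^sub>R u"
    proof (cases "u$1 = 0")
      case True
      then have "u$2 \<noteq> 0" using u by (auto simp: vec_eq_iff forall_2)
      then show ?thesis using that[of "w$2 / u$2"] \<open>u$1 * w$2 = u$2 * w$1\<close> True
        by (simp add: vec_eq_iff forall_2 field_simps)
    next
      case False
      then show ?thesis using that[of "w$1 / u$1"] \<open>u$1 * w$2 = u$2 * w$1\<close>
        by (simp add: vec_eq_iff forall_2 field_simps)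
    qed
    have pb: "B j = X2 + (b j * m) *\<^sub>R u" for j using pb0[of j] wm by simp
    have na: "a j \<noteq> a (j+1)" for j using dA[of j] pa0 by auto
    have nb: "b j * m \<noteq> b (j+1) * m" for j using dB[of j] pb by auto
    have "B (i+2) - A (i+2) = B i - A i"
      by (rule step_par[where A=A and B=B and p=X1 and a=a and u=u and q=X2 and b="\<lambda>j. b j * m", OF circ pa0 pb u na nb])
    then show ?thesis unfolding A_def B_def by (intro exI[of _ 1]) simp
  next
    case False
    define cr where "cr = (\<lambda>(x::point) (y::point). x$1 * y$2 - x$2 * y$1)"
    have cuw: "cr u w \<noteq> 0" using False unfolding cr_def by simp
    define t where "t = cr (X2 - X1) w / cr u w"
    define s where "s = cr (X2 - X1) u / cr u w"
    have O: "X1 + t *\<^sub>R u = X2 + s *\<^sub>R w"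
    proof -
      have e1: "t * cr u w = cr (X2 - X1) w" "s * cr u w = cr (X2 - X1) u" using cuw unfolding t_def s_def by simp_all
      have c: "(X1$1 + t * u$1) * cr u w = (X2$1 + s * w$1) * cr u w"
              "(X1$2 + t * u$2) * cr u w = (X2$2 + s * w$2) * cr u w"
        using cramer_comp[OF e1[unfolded cr_def vector_minus_component]] unfolding cr_def by simp_all
      then show ?thesis using cuw by (simp add: vec_eq_iff forall_2)
    qed
    have pa: "A j = (X1 + t *\<^sub>R u) + (a j - t) *\<^sub>R u" for j
      using pa0[of j] by (simp add: algebra_simps)
    have pb: "B j = (X1 + t *\<^sub>R u) + (b j - s) *\<^sub>R w" for j
      using pb0[of j] unfolding O by (simp add: algebra_simps)
    have na: "a j - t \<noteq> a (j+1) - t" for j using dA[of j] pa0 by auto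
    have nb: "b j - s \<noteq> b (j+1) - s" for j using dB[of j] pb0 by auto
    show ?thesis
      using step_int[where A=A and B=B and Oo="X1 + t *\<^sub>R u" and a="\<lambda>j. a j - t" and u=u and b="\<lambda>j. b j - s" and w=w, OF circ pa pb u w na nb dAB] unfolding A_def B_def .
  qed
qed

theorem proposition4p12:
  fixes P :: "int \<Rightarrow> nat \<Rightarrow> point"
  assumes net: "circular_net P"
    and generic: "\<And>i. distinct [P i 1, P (i+1) 1, P (i+1) 2, P i 2]"
    and H: "\<And>j. j \<in> {1, 2} \<Longrightarrow> \<exists>L. is_line L \<and> (\<forall>i. P i j \<in> L)"
  shows "(\<forall>i k. parallel (join (P (2*i) 1) (P (2*i) 2)) (join (P (2*k) 1) (P (2*k) 2))) \<and>
         (\<forall>i k. parallel (join (P (2*i+1) 1) (P (2*i+1) 2)) (join (P (2*k+1) 1) (P (2*k+1) 2)))"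
proof -
  define D where "D = (\<lambda>i. P i 2 - P i 1)"
  have st: "\<exists>l. l \<noteq> 0 \<and> D (j+2) = l *\<^sub>R D j" for j
    using two_step[OF net generic H] unfolding D_def by blast
  have ne: "P j 1 \<noteq> P j 2" for j using generic[of j] by auto
  have gen: "parallel (join (P m 1) (P m 2)) (join (P n 1) (P n 2))" if ev: "even (n - m)" for m n
  proof -
    obtain k where "n - m = 2*k" using ev by (rule dvdE)
    then have k: "n = m + 2*k" by simp
    obtain l where l: "l \<noteq> 0" "D (m + 2*k) = l *\<^sub>R D m" using chain[where D=D, OF st] by blast
    show ?thesis by (rule parallel_of[OF ne ne l(1)]) (use l(2) k in \<open>simp add: D_def\<close>)
  qed
  have e1: "even (2*k - 2*i)" for i k :: int by simp
  have e2: "even ((2*k+1) - (2*i+1))" for i k :: int by simp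
  show ?thesis using gen[OF e1] gen[OF e2] by blast
qed

end
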